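(* If $\beta:[r]\to[2n]$ is qubit-injective, then $T_{TCR}(\beta)$ is transitive and closed under reversal. If moreover $\beta':[s]\to[2n]$ ($s>r$) is qubit-injective and agrees with $\beta$ on $[r]$, then $T_{TCR}(\beta)\subseteq T_{TCR}(\beta')$.
   Context: $[N]=\{1,\dots,N\}$. $Q_n(i)=\min(i,2n+1-i)$ for $i\in[2n]$; $\beta:[r]\to[2n]$ is qubit-injective if $Q_n\circ\beta:[r]\to[n]$ is injective. $T_M(\beta)=\{(i,j): i\in\mathrm{Im}(\beta),\ j\in[2n],\ j<i,\ Q_n(j)\notin\{Q_n(\beta(1)),\dots,Q_n(\beta(\beta^{-1}(i)-1))\}\}$; $T_{MR}(\beta)=\{(i,j):(2n+1-j,2n+1-i)\in T_M(\beta)\}$; $T_{TCR}(\beta)=T_M(\beta)\cup T_{MR}(\beta)$. A set $T$ of pairs is transitive if $(i,j),(j,k)\in T\Rightarrow(i,k)\in T$, and closed under reversal if $(i,j)\in T\iff(2n+1-j,2n+1-i)\in T$. *)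

theory Defs
  imports Main
begin

definition Q :: "nat \<Rightarrow> nat \<Rightarrow> nat" where
  "Q n i = min i (2*n + 1 - i)"

text \<open>beta : [r] -> [2n], represented as a function on nat restricted to {1..r}.\<close>
definition maps_into :: "nat \<Rightarrow> nat \<Rightarrow> (nat \<Rightarrow> nat) \<Rightarrow> bool" where
  "maps_into n r \<beta> \<longleftrightarrow> (\<forall>k\<in>{1..r}. \<beta> k \<in> {1..2*n})"

definition qubit_injective :: "nat \<Rightarrow> nat \<Rightarrow> (nat \<Rightarrow> nat) \<Rightarrow> bool" where
  "qubit_injective n r \<beta> \<longleftrightarrow> maps_into n r \<beta> \<and> inj_on (Q n \<circ> \<beta>) {1..r}"

definition T_M :: "nat \<Rightarrow> nat \<Rightarrow> (nat \<Rightarrow> nat) \<Rightarrow> (nat \<times> nat) set" where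
  "T_M n r \<beta> = {(i, j). \<exists>m\<in>{1..r}. i = \<beta> m \<and> j \<in> {1..2*n} \<and> j < i \<and>
      Q n j \<notin> (Q n \<circ> \<beta>) ` {1..<m}}"

definition T_MR :: "nat \<Rightarrow> nat \<Rightarrow> (nat \<Rightarrow> nat) \<Rightarrow> (nat \<times> nat) set" where
  "T_MR n r \<beta> = {(i, j). (2*n + 1 - j, 2*n + 1 - i) \<in> T_M n r \<beta>}"

definition T_TCR :: "nat \<Rightarrow> nat \<Rightarrow> (nat \<Rightarrow> nat) \<Rightarrow> (nat \<times> nat) set" where
  "T_TCR n r \<beta> = T_M n r \<beta> \<union> T_MR n r \<beta>"

definition closed_under_reversal :: "nat \<Rightarrow> (nat \<times> nat) set \<Rightarrow> bool" where
  "closed_under_reversal n T \<longleftrightarrow> (\<forall>i j. (i, j) \<in> T \<longleftrightarrow> (2*n + 1 - j, 2*n + 1 - i) \<in> T)"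

end

theory Submission
  imports Defs
begin

lemma Q_rev: "j \<le> 2*n \<Longrightarrow> Q n (2*n+1-j) = Q n j"
  unfolding Q_def by auto

lemma TM_iff: "(i,j) \<in> T_M n r \<beta> \<longleftrightarrow> (\<exists>m\<in>{1..r}. i = \<beta> m \<and> j \<in> {1..2*n} \<and> j < i \<and>
      Q n j \<notin> (Q n \<circ> \<beta>) ` {1..<m})"
  unfolding T_M_def by simp

lemma TMR_iff: "(i,j) \<in> T_MR n r \<beta> \<longleftrightarrow> (2*n + 1 - j, 2*n + 1 - i) \<in> T_M n r \<beta>"
  unfolding T_MR_def by simp

lemma rev_in: "2*n+1-(j::nat) \<in> {1..2*n} \<Longrightarrow> j \<in> {1..2*n}"
  by (simp add: atLeastAtMost_iff) linarith

lemma TM_range: "maps_into n r \<beta> \<Longrightarrow> (i,j) \<in> T_M n r \<beta> \<Longrightarrow> i \<in> {1..2*n} \<and> j \<in> {1..2*n}"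
proof -
  assume a: "maps_into n r \<beta>" "(i,j) \<in> T_M n r \<beta>"
  then obtain m where m: "m \<in> {1..r}" "i = \<beta> m" "j \<in> {1..2*n}"
    unfolding TM_iff by blast
  have "\<beta> m \<in> {1..2*n}" using a(1) m(1) unfolding maps_into_def by blast
  then show ?thesis using m by simp
qed

lemma TMR_range: "maps_into n r \<beta> \<Longrightarrow> (i,j) \<in> T_MR n r \<beta> \<Longrightarrow> i \<in> {1..2*n} \<and> j \<in> {1..2*n}"
proof -
  assume a: "maps_into n r \<beta>" "(i,j) \<in> T_MR n r \<beta>"
  have "(2*n+1-j, 2*n+1-i) \<in> T_M n r \<beta>" using a(2) by (simp only: TMR_iff)
  from TM_range[OF a(1) this] have "2*n+1-j \<in> {1..2*n}" "2*n+1-i \<in> {1..2*n}" by simp_all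
  then show ?thesis using rev_in by blast
qed

lemma inj_Q:
  assumes "qubit_injective n r \<beta>" "a \<in> {1..r}" "b \<in> {1..r}" "Q n (\<beta> a) = Q n (\<beta> b)"
  shows "a = b"
proof -
  have "inj_on (Q n \<circ> \<beta>) {1..r}" using assms(1) unfolding qubit_injective_def by blast
  moreover have "(Q n \<circ> \<beta>) a = (Q n \<circ> \<beta>) b" using assms(4) by simp
  ultimately show ?thesis using assms(2,3) by (rule inj_onD)
qed

lemma transM:
  assumes qi: "qubit_injective n r \<beta>" and h1: "(i,j) \<in> T_M n r \<beta>" and h2: "(j,k) \<in> T_M n r \<beta>"
  shows "(i,k) \<in> T_M n r \<beta>"
proof -
  obtain m where m: "m \<in> {1..r}" "i = \<beta> m" "j \<in> {1..2*n}" "j < i" "Q n j \<notin> (Q n \<circ> \<beta>) ` {1..<m}"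
    using h1 unfolding TM_iff by blast
  obtain m' where m': "m' \<in> {1..r}" "j = \<beta> m'" "k \<in> {1..2*n}" "k < j" "Q n k \<notin> (Q n \<circ> \<beta>) ` {1..<m'}"
    using h2 unfolding TM_iff by blast
  have "\<not> m' < m"
  proof
    assume "m' < m" then have "m' \<in> {1..<m}" using m'(1) by simp
    then have "(Q n \<circ> \<beta>) m' \<in> (Q n \<circ> \<beta>) ` {1..<m}" by (rule imageI)
    then show False using m'(2) m(5) by simp
  qed
  moreover have "m' \<noteq> m" using m(2,4) m'(2) by auto
  ultimately have "m < m'" by simp
  then have "{1..<m} \<subseteq> {1..<m'}" by simp
  then have "Q n k \<notin> (Q n \<circ> \<beta>) ` {1..<m}" using m'(5) by blast
  moreover have "k < i" using m(4) m'(4) by simp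
  ultimately show ?thesis unfolding TM_iff using m(1,2) m'(3) by blast
qed

lemma transMR:
  assumes qi: "qubit_injective n r \<beta>" and h1: "(i,j) \<in> T_MR n r \<beta>" and h2: "(j,k) \<in> T_MR n r \<beta>"
  shows "(i,k) \<in> T_MR n r \<beta>"
proof -
  have a: "(2*n+1-k, 2*n+1-j) \<in> T_M n r \<beta>" using h2 TMR_iff[of j k n r \<beta>] by blast
  have b: "(2*n+1-j, 2*n+1-i) \<in> T_M n r \<beta>" using h1 TMR_iff[of i j n r \<beta>] by blast
  have "(2*n+1-k, 2*n+1-i) \<in> T_M n r \<beta>" by (rule transM[OF qi a b])
  then show ?thesis using TMR_iff[of i k n r \<beta>] by blast
qed

lemma trans_M_MR:
  assumes qi: "qubit_injective n r \<beta>" and h1: "(i,j) \<in> T_M n r \<beta>" and h2: "(j,k) \<in> T_MR n r \<beta>"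
  shows "(i,k) \<in> T_TCR n r \<beta>"
proof -
  have mi: "maps_into n r \<beta>" using qi unfolding qubit_injective_def by auto
  obtain m where m: "m \<in> {1..r}" "i = \<beta> m" "j \<in> {1..2*n}" "j < i" "Q n j \<notin> (Q n \<circ> \<beta>) ` {1..<m}"
    using h1 unfolding TM_iff by blast
  obtain m' where m': "m' \<in> {1..r}" "2*n+1-k = \<beta> m'" "2*n+1-j \<in> {1..2*n}" "2*n+1-j < 2*n+1-k"
      "Q n (2*n+1-j) \<notin> (Q n \<circ> \<beta>) ` {1..<m'}"
    using h2 unfolding TMR_iff TM_iff by blast
  have kr: "k \<in> {1..2*n}" using TMR_range[OF mi h2] by auto
  have ir: "i \<in> {1..2*n}" using TM_range[OF mi h1] by auto
  show ?thesis
  proof (cases "m \<le> m'")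
    case True
    have "Q n k \<notin> (Q n \<circ> \<beta>) ` {1..<m}"
    proof
      assume "Q n k \<in> (Q n \<circ> \<beta>) ` {1..<m}"
      then obtain l where l: "l \<in> {1..<m}" "Q n k = Q n (\<beta> l)" by auto
      have "Q n k = Q n (\<beta> m')" using m'(2) Q_rev[of k n] kr by auto
      then have "l = m'" using inj_Q[OF qi, of l m'] l m m' by auto
      then show False using l True by auto
    qed
    then have "(i,k) \<in> T_M n r \<beta>" unfolding TM_iff using m m' kr ir by auto
    then show ?thesis unfolding T_TCR_def by auto
  next
    case False
    have "Q n (2*n+1-i) \<notin> (Q n \<circ> \<beta>) ` {1..<m'}"
    proof
      assume "Q n (2*n+1-i) \<in> (Q n \<circ> \<beta>) ` {1..<m'}"
      then obtain l where l: "l \<in> {1..<m'}" "Q n (2*n+1-i) = Q n (\<beta> l)" by auto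
      have "Q n (2*n+1-i) = Q n (\<beta> m)" using m(2) Q_rev[of i n] ir by auto
      then have "l = m" using inj_Q[OF qi, of l m] l m m' by auto
      then show False using l False by auto
    qed
    then have "(2*n+1-k, 2*n+1-i) \<in> T_M n r \<beta>" unfolding TM_iff using m m' kr ir
      by (intro bexI[of _ m']) auto
    then have "(i,k) \<in> T_MR n r \<beta>" using TMR_iff[of i k n r \<beta>] by blast
    then show ?thesis unfolding T_TCR_def by blast
  qed
qed

lemma trans_MR_M:
  assumes qi: "qubit_injective n r \<beta>" and h1: "(i,j) \<in> T_MR n r \<beta>" and h2: "(j,k) \<in> T_M n r \<beta>"
  shows False
proof -
  have mi: "maps_into n r \<beta>" using qi unfolding qubit_injective_def by auto
  obtain m where m: "m \<in> {1..r}" "2*n+1-j = \<beta> m"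
    using h1 unfolding TMR_iff TM_iff by blast
  obtain m' where m': "m' \<in> {1..r}" "j = \<beta> m'"
    using h2 unfolding TM_iff by blast
  have jr: "j \<in> {1..2*n}" using TM_range[OF mi h2] by auto
  have "Q n (\<beta> m) = Q n (\<beta> m')" using m m' Q_rev[of j n] jr by auto
  then have "m = m'" using inj_Q[OF qi] m m' by auto
  then have "2*n+1-j = j" using m m' by simp
  then have "2*j = 2*n+1" using jr by simp
  then show False by presburger
qed

theorem lemma7:
  fixes n r :: nat and \<beta> :: "nat \<Rightarrow> nat"
  assumes "qubit_injective n r \<beta>"
  shows "trans (T_TCR n r \<beta>) \<and> closed_under_reversal n (T_TCR n r \<beta>) \<and>
    (\<forall>s \<beta>'. s > r \<and> qubit_injective n s \<beta>' \<and> (\<forall>k\<in>{1..r}. \<beta>' k = \<beta> k)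
       \<longrightarrow> T_TCR n r \<beta> \<subseteq> T_TCR n s \<beta>')"
proof (intro conjI allI impI)
  have mi: "maps_into n r \<beta>" using assms unfolding qubit_injective_def by auto
  show "trans (T_TCR n r \<beta>)"
  proof (rule transI)
    fix i j k assume a: "(i,j) \<in> T_TCR n r \<beta>" "(j,k) \<in> T_TCR n r \<beta>"
    then show "(i,k) \<in> T_TCR n r \<beta>"
      unfolding T_TCR_def
      using transM[OF assms] transMR[OF assms] trans_M_MR[OF assms, unfolded T_TCR_def]
        trans_MR_M[OF assms] by blast
  qed
  have rng: "\<And>i j. (i,j) \<in> T_TCR n r \<beta> \<Longrightarrow> i \<in> {1..2*n} \<and> j \<in> {1..2*n}"
    unfolding T_TCR_def using TM_range[OF mi] TMR_range[OF mi] by blast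
  show "closed_under_reversal n (T_TCR n r \<beta>)"
    unfolding closed_under_reversal_def
  proof (intro allI iffI)
    fix i j assume a: "(i,j) \<in> T_TCR n r \<beta>"
    have "i \<in> {1..2*n}" "j \<in> {1..2*n}" using rng[OF a] by auto
    then have e: "2*n+1-(2*n+1-i) = i" "2*n+1-(2*n+1-j) = j" by auto
    show "(2*n+1-j, 2*n+1-i) \<in> T_TCR n r \<beta>"
      using a TMR_iff[of i j n r \<beta>] TMR_iff[of "2*n+1-j" "2*n+1-i" n r \<beta>] unfolding T_TCR_def e by blast
  next
    fix i j assume a: "(2*n+1-j, 2*n+1-i) \<in> T_TCR n r \<beta>"
    have "2*n+1-i \<in> {1..2*n}" "2*n+1-j \<in> {1..2*n}" using rng[OF a] by auto
    then have e: "2*n+1-(2*n+1-i) = i" "2*n+1-(2*n+1-j) = j" by auto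
    show "(i,j) \<in> T_TCR n r \<beta>"
      using a TMR_iff[of i j n r \<beta>] TMR_iff[of "2*n+1-j" "2*n+1-i" n r \<beta>] unfolding T_TCR_def e by blast
  qed
  fix s \<beta>' assume h: "r < s \<and> qubit_injective n s \<beta>' \<and> (\<forall>k\<in>{1..r}. \<beta>' k = \<beta> k)"
  have sub: "T_M n r \<beta> \<subseteq> T_M n s \<beta>'"
  proof
    fix x assume "x \<in> T_M n r \<beta>"
    then obtain i j where x: "x = (i,j)" and "(i,j) \<in> T_M n r \<beta>" by (cases x) auto
    then obtain m where m: "m \<in> {1..r}" "i = \<beta> m" "j \<in> {1..2*n}" "j < i" "Q n j \<notin> (Q n \<circ> \<beta>) ` {1..<m}"
      unfolding TM_iff by blast
    have "(Q n \<circ> \<beta>') ` {1..<m} = (Q n \<circ> \<beta>) ` {1..<m}"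
      using h m(1) by (intro image_cong) auto
    then show "x \<in> T_M n s \<beta>'" unfolding x TM_iff using m h
      by (intro bexI[of _ m]) auto
  qed
  show "T_TCR n r \<beta> \<subseteq> T_TCR n s \<beta>'"
    unfolding T_TCR_def using sub unfolding T_MR_def by auto
qed

end
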